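(* Let $n\ge 3$ be an odd integer and $k\ge 3$ an integer. Then $\psi(C_n\square P_k)=3$, i.e. the minimum size of a doubly resolving set of the cartesian product $C_n\square P_k$ is $3$.
   Context: All graphs are finite and connected; $d(u,v)$ is the shortest-path distance. $C_n$ is the cycle on $n$ vertices and $P_k$ the path on $k$ vertices. The cartesian product $G\square H$ has vertex set $V(G)\times V(H)$, with $(g_1,h_1)$ adjacent to $(g_2,h_2)$ iff either $h_1=h_2$ and $g_1g_2\in E(G)$, or $g_1=g_2$ and $h_1h_2\in E(H)$. For an ordered set $Q=\{q_1,\dots,q_l\}$ of vertices, $r(x|Q)=(d(x,q_1),\dots,d(x,q_l))$. $Q$ is a doubly resolving set of $G$ if for any two distinct vertices $x,y$ of $G$, $r(x|Q)-r(y|Q)\neq\lambda(1,\dots,1)$ for every integer $\lambda$. $\psi(G)$ denotes the minimum size of a doubly resolving set of $G$. *)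

theory Defs
  imports Main
begin

definition is_walk :: "('a \<Rightarrow> 'a \<Rightarrow> bool) \<Rightarrow> 'a set \<Rightarrow> 'a list \<Rightarrow> bool" where
  "is_walk E V xs \<longleftrightarrow> xs \<noteq> [] \<and> set xs \<subseteq> V \<and>
     (\<forall>i. Suc i < length xs \<longrightarrow> E (xs ! i) (xs ! Suc i))"

definition gdist :: "'a set \<Rightarrow> ('a \<Rightarrow> 'a \<Rightarrow> bool) \<Rightarrow> 'a \<Rightarrow> 'a \<Rightarrow> nat" where
  "gdist V E u v = (LEAST m. \<exists>xs. is_walk E V xs \<and> hd xs = u \<and> last xs = v \<and> length xs = Suc m)"

definition doubly_resolving :: "'a set \<Rightarrow> ('a \<Rightarrow> 'a \<Rightarrow> bool) \<Rightarrow> 'a set \<Rightarrow> bool" where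
  "doubly_resolving V E Q \<longleftrightarrow> Q \<subseteq> V \<and>
     (\<forall>x\<in>V. \<forall>y\<in>V. x \<noteq> y \<longrightarrow>
        \<not> (\<exists>lam::int. \<forall>q\<in>Q. int (gdist V E x q) - int (gdist V E y q) = lam))"

definition psi :: "'a set \<Rightarrow> ('a \<Rightarrow> 'a \<Rightarrow> bool) \<Rightarrow> nat" where
  "psi V E = (LEAST m. \<exists>Q. finite Q \<and> card Q = m \<and> doubly_resolving V E Q)"

definition cycle_V :: "nat \<Rightarrow> nat set" where "cycle_V n = {0..<n}"
definition cycle_E :: "nat \<Rightarrow> nat \<Rightarrow> nat \<Rightarrow> bool" where
  "cycle_E n i j \<longleftrightarrow> i < n \<and> j < n \<and> ((i + 1) mod n = j \<or> (j + 1) mod n = i)"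

definition path_V :: "nat \<Rightarrow> nat set" where "path_V k = {0..<k}"
definition path_E :: "nat \<Rightarrow> nat \<Rightarrow> nat \<Rightarrow> bool" where
  "path_E k i j \<longleftrightarrow> i < k \<and> j < k \<and> (i + 1 = j \<or> j + 1 = i)"

definition cprod_V :: "'a set \<Rightarrow> 'b set \<Rightarrow> ('a \<times> 'b) set" where
  "cprod_V VG VH = VG \<times> VH"
definition cprod_E :: "('a \<Rightarrow> 'a \<Rightarrow> bool) \<Rightarrow> ('b \<Rightarrow> 'b \<Rightarrow> bool) \<Rightarrow> 'a \<times> 'b \<Rightarrow> 'a \<times> 'b \<Rightarrow> bool" where
  "cprod_E EG EH p q \<longleftrightarrow>
     (snd p = snd q \<and> EG (fst p) (fst q)) \<or> (fst p = fst q \<and> EH (snd p) (snd q))"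

end

theory Submission
  imports Defs
begin

inductive Wi :: "'a set \<Rightarrow> ('a \<Rightarrow> 'a \<Rightarrow> bool) \<Rightarrow> 'a \<Rightarrow> 'a \<Rightarrow> nat \<Rightarrow> bool"
  for V E where
  W0: "u \<in> V \<Longrightarrow> Wi V E u u 0"
| WS: "u \<in> V \<Longrightarrow> E u v \<Longrightarrow> Wi V E v w m \<Longrightarrow> Wi V E u w (Suc m)"

lemma is_walk_single: "is_walk E V [x] \<longleftrightarrow> x \<in> V"
  by (auto simp: is_walk_def)

lemma is_walk_cons2: "is_walk E V (x # y # ys) \<longleftrightarrow> x \<in> V \<and> E x y \<and> is_walk E V (y # ys)"
proof
  assume h: "is_walk E V (x # y # ys)"
  have "Suc 0 < length (x#y#ys)" by simp
  with h have "E ((x#y#ys) ! 0) ((x#y#ys) ! Suc 0)" unfolding is_walk_def by blast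
  then have "E x y" by simp
  moreover have "\<forall>i. Suc i < length (y#ys) \<longrightarrow> E ((y#ys) ! i) ((y#ys) ! Suc i)"
  proof (intro allI impI)
    fix i assume "Suc i < length (y#ys)"
    then have "Suc (Suc i) < length (x#y#ys)" by simp
    with h have "E ((x#y#ys) ! Suc i) ((x#y#ys) ! Suc (Suc i))" unfolding is_walk_def by blast
    then show "E ((y#ys) ! i) ((y#ys) ! Suc i)" by simp
  qed
  ultimately show "x \<in> V \<and> E x y \<and> is_walk E V (y # ys)" using h unfolding is_walk_def by auto
next
  assume h: "x \<in> V \<and> E x y \<and> is_walk E V (y # ys)"
  have "\<forall>i. Suc i < length (x#y#ys) \<longrightarrow> E ((x#y#ys) ! i) ((x#y#ys) ! Suc i)"
  proof (intro allI impI)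
    fix i assume i: "Suc i < length (x#y#ys)"
    show "E ((x#y#ys) ! i) ((x#y#ys) ! Suc i)"
    proof (cases i)
      case 0 then show ?thesis using h by simp
    next
      case (Suc j)
      then have "Suc j < length (y#ys)" using i by simp
      with h have "E ((y#ys) ! j) ((y#ys) ! Suc j)" unfolding is_walk_def by blast
      then show ?thesis using Suc by simp
    qed
  qed
  then show "is_walk E V (x # y # ys)" using h unfolding is_walk_def by auto
qed

lemma walk_to_Wi: "is_walk E V xs \<Longrightarrow> Wi V E (hd xs) (last xs) (length xs - 1)"
proof (induction xs rule: induct_list012)
  case 1 then show ?case by (simp add: is_walk_def)
next
  case (2 x) then show ?case by (simp add: is_walk_single W0)
next
  case (3 x y zs)
  then have "x \<in> V" "E x y" "is_walk E V (y # zs)" by (auto simp: is_walk_cons2)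
  with 3 have "Wi V E y (last (y#zs)) (length (y#zs) - 1)" by simp
  then show ?case using Wi.WS[of x V E y] \<open>x\<in>V\<close> \<open>E x y\<close> by simp
qed

lemma Wi_to_walk: "Wi V E u v m \<Longrightarrow> \<exists>xs. is_walk E V xs \<and> hd xs = u \<and> last xs = v \<and> length xs = Suc m"
proof (induction rule: Wi.induct)
  case (W0 u) then show ?case by (intro exI[of _ "[u]"]) (simp add: is_walk_single)
next
  case (WS u v w m)
  then obtain xs where xs: "is_walk E V xs" "hd xs = v" "last xs = w" "length xs = Suc m" by blast
  then obtain ys where ys: "xs = v # ys" by (cases xs) auto
  show ?case using WS xs ys by (intro exI[of _ "u # xs"]) (simp add: is_walk_cons2)
qed

lemma gdist_Wi: "gdist V E u v = (LEAST m. Wi V E u v m)"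
proof -
  have "\<And>m. (\<exists>xs. is_walk E V xs \<and> hd xs = u \<and> last xs = v \<and> length xs = Suc m) \<longleftrightarrow> Wi V E u v m"
  proof
    fix m assume "\<exists>xs. is_walk E V xs \<and> hd xs = u \<and> last xs = v \<and> length xs = Suc m"
    then obtain xs where "is_walk E V xs" "hd xs = u" "last xs = v" "length xs = Suc m" by blast
    then show "Wi V E u v m" using walk_to_Wi[of E V xs] by simp
  next
    fix m assume "Wi V E u v m" then show "\<exists>xs. is_walk E V xs \<and> hd xs = u \<and> last xs = v \<and> length xs = Suc m"
      by (rule Wi_to_walk)
  qed
  then show ?thesis unfolding gdist_def by simp
qed

lemma gdist_eqI: "Wi V E u v D \<Longrightarrow> (\<And>m. Wi V E u v m \<Longrightarrow> D \<le> m) \<Longrightarrow> gdist V E u v = D"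
  unfolding gdist_Wi by (rule Least_equality)

lemma Wi_V: "Wi V E u v m \<Longrightarrow> u \<in> V \<and> v \<in> V"
  by (induction rule: Wi.induct) auto

lemma Wi_snoc: "Wi V E u v m \<Longrightarrow> E v w \<Longrightarrow> w \<in> V \<Longrightarrow> Wi V E u w (Suc m)"
  by (induction rule: Wi.induct) (auto intro: Wi.intros)

lemma Wi_trans: "Wi V E u v m \<Longrightarrow> Wi V E v w p \<Longrightarrow> Wi V E u w (m + p)"
  by (induction rule: Wi.induct) (auto intro: Wi.intros)

lemma Wi_sym: "Wi V E u v m \<Longrightarrow> (\<And>x y. E x y \<Longrightarrow> E y x) \<Longrightarrow> Wi V E v u m"
proof (induction rule: Wi.induct)
  case (W0 u) then show ?case by (auto intro: Wi.W0)
next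
  case (WS u v w m)
  have a: "Wi V E w v m" using WS.IH WS.prems by this
  have b: "E v u" using WS.prems WS.hyps(2) by this
  show ?case using Wi_snoc[OF a b WS.hyps(1)] by this
qed

lemma Wi_pot: "Wi V E u v m \<Longrightarrow> (\<And>x y. x \<in> V \<Longrightarrow> y \<in> V \<Longrightarrow> E x y \<Longrightarrow> h x \<le> h y + 1) \<Longrightarrow> h u \<le> h v + (m::nat)"
proof (induction rule: Wi.induct)
  case (W0 u) then show ?case by simp
next
  case (WS u v w m)
  have "v \<in> V" using Wi_V[OF WS.hyps(3)] by simp
  then have "h u \<le> h v + 1" using WS.prems[OF WS.hyps(1) _ WS.hyps(2)] by blast
  with WS show ?case by simp
qed


definition ad :: "nat \<Rightarrow> nat \<Rightarrow> nat" where "ad a b = (if a \<le> b then b - a else a - b)"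
definition cd :: "nat \<Rightarrow> nat \<Rightarrow> nat \<Rightarrow> nat" where "cd n a b = min (ad a b) (n - ad a b)"

lemma mod_succ: "a < (n::nat) \<Longrightarrow> (a + 1) mod n = (if a + 1 = n then 0 else a + 1)"
  by auto

lemma cycle_E_iff: "cycle_E n a c \<longleftrightarrow> a < n \<and> c < n \<and>
   ((a + 1 = n \<and> c = 0) \<or> (a + 1 < n \<and> c = a + 1) \<or> (c + 1 = n \<and> a = 0) \<or> (c + 1 < n \<and> a = c + 1))"
  unfolding cycle_E_def
  by (smt (verit) Suc_eq_plus1 Suc_lessI mod_self mod_less)

lemma cyc_step: "cycle_E n a c \<Longrightarrow> b < n \<Longrightarrow> cd n a b \<le> cd n c b + 1"
  unfolding cycle_E_iff cd_def ad_def by auto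

lemma path_step: "path_E k i j \<Longrightarrow> ad i l \<le> ad j l + 1"
  unfolding path_E_def ad_def by auto

context
  fixes n k :: nat
  assumes n3: "n \<ge> 3" and k3: "k \<ge> 3"
begin

abbreviation "VV \<equiv> cprod_V (cycle_V n) (path_V k)"
abbreviation "EE \<equiv> cprod_E (cycle_E n) (path_E k)"

lemma VV_iff: "(a, i) \<in> VV \<longleftrightarrow> a < n \<and> i < k"
  by (simp add: cprod_V_def cycle_V_def path_V_def)

lemma EE_iff: "EE (a, i) (b, j) \<longleftrightarrow> (i = j \<and> cycle_E n a b) \<or> (a = b \<and> path_E k i j)"
  by (simp add: cprod_E_def)

lemma EE_sym: "EE x y \<Longrightarrow> EE y x"
  by (auto simp: cprod_E_def cycle_E_def path_E_def)

lemma horiz_up: "a + t < n \<Longrightarrow> i < k \<Longrightarrow> Wi VV EE (a, i) (a + t, i) t"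
proof (induction t arbitrary: a)
  case 0 then show ?case by (auto intro: Wi.W0 simp: VV_iff)
next
  case (Suc t)
  have "a + 1 + t < n" using Suc.prems by simp
  then have "Wi VV EE (a + 1, i) (a + 1 + t, i) t" using Suc.IH Suc.prems(2) by blast
  moreover have "EE (a, i) (a + 1, i)" using Suc.prems by (simp add: EE_iff cycle_E_def)
  moreover have "(a, i) \<in> VV" using Suc.prems by (simp add: VV_iff)
  ultimately show ?case using Wi.WS by fastforce
qed

lemma vert_up: "i + t < k \<Longrightarrow> a < n \<Longrightarrow> Wi VV EE (a, i) (a, i + t) t"
proof (induction t arbitrary: i)
  case 0 then show ?case by (auto intro: Wi.W0 simp: VV_iff)
next
  case (Suc t)
  have "i + 1 + t < k" using Suc.prems by simp
  then have "Wi VV EE (a, i + 1) (a, i + 1 + t) t" using Suc.IH Suc.prems(2) by blast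
  moreover have "EE (a, i) (a, i + 1)" using Suc.prems by (simp add: EE_iff path_E_def)
  moreover have "(a, i) \<in> VV" using Suc.prems by (simp add: VV_iff)
  ultimately show ?case using Wi.WS by fastforce
qed

lemma Wsym: "Wi VV EE u v m \<Longrightarrow> Wi VV EE v u m"
  using Wi_sym EE_sym by metis

lemma horiz: "a < n \<Longrightarrow> b < n \<Longrightarrow> i < k \<Longrightarrow> Wi VV EE (a, i) (b, i) (ad a b)"
proof (cases "a \<le> b")
  case True
  assume "a < n" "b < n" "i < k"
  then show ?thesis using horiz_up[of a "b - a" i] True by (simp add: ad_def)
next
  case False
  assume "a < n" "b < n" "i < k"
  then show ?thesis using Wsym[OF horiz_up[of b "a - b" i]] False by (simp add: ad_def)
qed

lemma wrap: "a \<le> b \<Longrightarrow> b < n \<Longrightarrow> i < k \<Longrightarrow> Wi VV EE (a, i) (b, i) (n - (b - a))"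
proof -
  assume h: "a \<le> b" "b < n" "i < k"
  have "ad a 0 = a" by (simp add: ad_def)
  then have w1: "Wi VV EE (a, i) (0, i) a" using horiz[of a 0 i] h by simp
  have e: "EE (0, i) (n - 1, i)" using n3 by (simp add: EE_iff cycle_E_def)
  have "ad (n - 1) b = n - 1 - b" using h by (simp add: ad_def)
  then have w2: "Wi VV EE (n - 1, i) (b, i) (n - 1 - b)" using horiz[of "n - 1" b i] h n3 by simp
  have "Wi VV EE (0, i) (b, i) (Suc (n - 1 - b))" using Wi.WS[OF _ e w2] n3 h by (simp add: VV_iff)
  from Wi_trans[OF w1 this] have "Wi VV EE (a, i) (b, i) (a + Suc (n - 1 - b))" .
  moreover have "a + Suc (n - 1 - b) = n - (b - a)" using h by simp
  ultimately show ?thesis by metis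
qed

lemma horiz_cd: "a < n \<Longrightarrow> b < n \<Longrightarrow> i < k \<Longrightarrow> Wi VV EE (a, i) (b, i) (cd n a b)"
proof -
  assume h: "a < n" "b < n" "i < k"
  show ?thesis
  proof (cases "ad a b \<le> n - ad a b")
    case True then show ?thesis using horiz[OF h] by (simp add: cd_def)
  next
    case False
    then have c: "cd n a b = n - ad a b" by (simp add: cd_def)
    show ?thesis
    proof (cases "a \<le> b")
      case True then show ?thesis using wrap[of a b i] h c by (simp add: ad_def)
    next
      case F: False then show ?thesis using Wsym[OF wrap[of b a i]] h c by (simp add: ad_def)
    qed
  qed
qed

lemma vert: "a < n \<Longrightarrow> i < k \<Longrightarrow> j < k \<Longrightarrow> Wi VV EE (a, i) (a, j) (ad i j)"
proof (cases "i \<le> j")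
  case True
  assume "a < n" "i < k" "j < k"
  then show ?thesis using vert_up[of i "j - i" a] True by (simp add: ad_def)
next
  case False
  assume "a < n" "i < k" "j < k"
  then show ?thesis using Wsym[OF vert_up[of j "i - j" a]] False by (simp add: ad_def)
qed

lemma gd: "a < n \<Longrightarrow> b < n \<Longrightarrow> i < k \<Longrightarrow> j < k \<Longrightarrow> gdist VV EE (a, i) (b, j) = cd n a b + ad i j"
proof -
  assume h: "a < n" "b < n" "i < k" "j < k"
  show ?thesis
proof (rule gdist_eqI)
  show "Wi VV EE (a, i) (b, j) (cd n a b + ad i j)"
    using Wi_trans[OF horiz_cd[of a b i] vert[of b i j]] h by simp
  fix m assume w: "Wi VV EE (a, i) (b, j) m"
  define h where "h = (\<lambda>x::nat\<times>nat. cd n (fst x) b + ad (snd x) j)"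
  have "h (a, i) \<le> h (b, j) + m"
  proof (rule Wi_pot[OF w])
    fix x y assume xy: "x \<in> VV" "y \<in> VV" "EE x y"
    obtain x1 x2 y1 y2 where xs: "x = (x1, x2)" "y = (y1, y2)" by fastforce
    have "(x2 = y2 \<and> cycle_E n x1 y1) \<or> (x1 = y1 \<and> path_E k x2 y2)" using xy(3) xs EE_iff by simp
    then show "h x \<le> h y + 1"
    proof
      assume "x2 = y2 \<and> cycle_E n x1 y1"
      then show ?thesis using cyc_step[of n x1 y1 b] \<open>b < n\<close> xs unfolding h_def by auto
    next
      assume "x1 = y1 \<and> path_E k x2 y2"
      then show ?thesis using path_step[of k x2 y2 j] xs unfolding h_def by auto
    qed
  qed
  moreover have "cd n b b = 0" "ad j j = 0" by (auto simp: cd_def ad_def)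
  ultimately show "cd n a b + ad i j \<le> m" unfolding h_def by simp
qed
qed

end

lemma cd0: "a < 2*m+1 \<Longrightarrow> cd (2*m+1) a 0 = (if a \<le> m then a else 2*m+1-a)"
  unfolding cd_def ad_def by auto

lemma cdm: "a < 2*m+1 \<Longrightarrow> cd (2*m+1) a m = (if a \<le> m then m - a else a - m)"
  unfolding cd_def ad_def by auto

lemma g_inj: assumes "a < 2*m+1" "b < 2*m+1"
  and "int (cd (2*m+1) a 0) - int (cd (2*m+1) a m) = int (cd (2*m+1) b 0) - int (cd (2*m+1) b m)"
  shows "a = b"
  using assms unfolding cd0[OF assms(1)] cd0[OF assms(2)] cdm[OF assms(1)] cdm[OF assms(2)]
  by (auto split: if_splits) presburger+

lemma cd_le: "a < n \<Longrightarrow> b < n \<Longrightarrow> odd n \<Longrightarrow> cd n a b \<le> (n - 1) div 2"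
  unfolding cd_def ad_def by (auto elim!: oddE)

lemma ad_le: "i < k \<Longrightarrow> j < k \<Longrightarrow> ad i j \<le> k - 1"
  unfolding ad_def by auto


lemma VVc: "(x \<in> cprod_V (cycle_V n) (path_V k)) \<longleftrightarrow> fst x < n \<and> snd x < k"
  by (cases x) (simp add: cprod_V_def cycle_V_def path_V_def)

lemma lower:
  fixes n k :: nat
  assumes n3: "n \<ge> 3" and odd: "odd n" and k3: "k \<ge> 3"
  assumes dr: "doubly_resolving (cprod_V (cycle_V n) (path_V k)) (cprod_E (cycle_E n) (path_E k)) Q"
    and fin: "finite Q"
  shows "3 \<le> card Q"
proof (rule ccontr)
  let ?V = "cprod_V (cycle_V n) (path_V k)"
  let ?E = "cprod_E (cycle_E n) (path_E k)"
  let ?d = "gdist ?V ?E"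
  assume "\<not> 3 \<le> card Q"
  then have c2: "card Q \<le> 2" by simp
  have QV: "Q \<subseteq> ?V" using dr unfolding doubly_resolving_def by blast
  obtain q1 q2 where q: "q1 \<in> ?V" "q2 \<in> ?V" "Q \<subseteq> {q1, q2}"
  proof (cases "Q = {}")
    case True
    have "(0, 0) \<in> ?V" using n3 k3 by (simp add: VVc)
    then show ?thesis using that True by blast
  next
    case False
    then obtain q1 where q1: "q1 \<in> Q" by blast
    show ?thesis
    proof (cases "Q - {q1} = {}")
      case True then show ?thesis using that[of q1 q1] q1 QV by blast
    next
      case False
      then obtain q2 where q2: "q2 \<in> Q" "q2 \<noteq> q1" by blast
      have "Q = {q1, q2}"
      proof (rule ccontr)
        assume "Q \<noteq> {q1, q2}"
        then obtain q3 where "q3 \<in> Q" "q3 \<noteq> q1" "q3 \<noteq> q2" using q1 q2 by blast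
        then have "{q1, q2, q3} \<subseteq> Q" using q1 q2 by blast
        then have "card {q1, q2, q3} \<le> card Q" using fin by (rule card_mono[rotated])
        moreover have "card {q1, q2, q3} = 3" using q2 \<open>q3 \<noteq> q1\<close> \<open>q3 \<noteq> q2\<close> by simp
        ultimately show False using c2 by simp
      qed
      then show ?thesis using that[of q1 q2] QV by blast
    qed
  qed
  define B where "B = int ((n - 1) div 2 + (k - 1))"
  define f where "f = (\<lambda>x. int (?d x q1) - int (?d x q2))"
  have dle: "int (?d x q) \<le> B" "0 \<le> int (?d x q)" if "x \<in> ?V" "q \<in> ?V" for x q
  proof -
    obtain a i where x: "x = (a, i)" by fastforce
    obtain b j where qq: "q = (b, j)" by fastforce
    have "?d x q = cd n a b + ad i j" using gd[OF n3 k3, of a b i j] that x qq by (simp add: VVc)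
    moreover have "cd n a b \<le> (n - 1) div 2" using cd_le[of a n b] odd that x qq by (simp add: VVc)
    moreover have "ad i j \<le> k - 1" using ad_le[of i k j] that x qq by (simp add: VVc)
    ultimately show "int (?d x q) \<le> B" "0 \<le> int (?d x q)" unfolding B_def by simp_all
  qed
  have img: "f ` ?V \<subseteq> {-B..B}"
  proof
    fix z assume "z \<in> f ` ?V"
    then obtain x where x: "x \<in> ?V" "z = f x" by blast
    show "z \<in> {-B..B}" using dle[OF x(1) q(1)] dle[OF x(1) q(2)] x(2) unfolding f_def by simp
  qed
  have cardB: "card {-B..B} = n + 2 * k - 2"
  proof -
    have "card {-B..B} = nat (2 * B + 1)" by simp
    moreover have "2 * ((n - 1) div 2) = n - 1" using odd n3 by (auto elim!: oddE)
    ultimately show ?thesis unfolding B_def using n3 k3 by simp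
  qed
  have cardV: "card ?V = n * k" by (simp add: cprod_V_def cycle_V_def path_V_def card_cartesian_product)
  have "(n - 2) * (k - 1) \<ge> 1 * 2" using n3 k3 by (intro mult_mono) auto
  then have "n + 2 * k - 2 < n * k" using n3 k3 by (simp add: algebra_simps diff_mult_distrib diff_mult_distrib2)
  have "\<not> inj_on f ?V"
  proof
    assume "inj_on f ?V"
    then have "card (f ` ?V) = n * k" using cardV by (simp add: card_image)
    moreover have "card (f ` ?V) \<le> card {-B..B}" using img by (rule card_mono[rotated]) simp
    ultimately show False using cardB \<open>n + 2 * k - 2 < n * k\<close> by simp
  qed
  then obtain x y where xy: "x \<in> ?V" "y \<in> ?V" "x \<noteq> y" "f x = f y" unfolding inj_on_def by blast
  have "\<exists>lam::int. \<forall>q\<in>Q. int (?d x q) - int (?d y q) = lam"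
  proof (intro exI ballI)
    fix q assume "q \<in> Q"
    then have "q = q1 \<or> q = q2" using q by blast
    then show "int (?d x q) - int (?d y q) = int (?d x q1) - int (?d y q1)"
      using xy(4) unfolding f_def by auto
  qed
  then show False using dr xy unfolding doubly_resolving_def by blast
qed


lemma upper:
  fixes n k :: nat
  assumes n3: "n \<ge> 3" and odd: "odd n" and k3: "k \<ge> 3"
  shows "doubly_resolving (cprod_V (cycle_V n) (path_V k)) (cprod_E (cycle_E n) (path_E k))
           {(0, 0), (0, k - 1), ((n - 1) div 2, 0)}"
  unfolding doubly_resolving_def
proof (intro conjI ballI impI notI)
  let ?V = "cprod_V (cycle_V n) (path_V k)"
  let ?E = "cprod_E (cycle_E n) (path_E k)"
  let ?d = "gdist ?V ?E"
  define m where "m = (n - 1) div 2"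
  have nm: "n = 2 * m + 1" unfolding m_def using odd n3 by (auto elim!: oddE)
  show "{(0, 0), (0, k - 1), ((n - 1) div 2, 0)} \<subseteq> ?V" using n3 k3 by (auto simp: VVc)
  fix x y assume x: "x \<in> ?V" and y: "y \<in> ?V" and ne: "x \<noteq> y"
  assume "\<exists>lam::int. \<forall>q\<in>{(0, 0), (0, k - 1), ((n - 1) div 2, 0)}. int (?d x q) - int (?d y q) = lam"
  then obtain lam :: int where l: "int (?d x (0,0)) - int (?d y (0,0)) = lam"
    "int (?d x (0,k-1)) - int (?d y (0,k-1)) = lam"
    "int (?d x (m,0)) - int (?d y (m,0)) = lam" unfolding m_def by auto
  obtain a i where xa: "x = (a, i)" by fastforce
  obtain b j where yb: "y = (b, j)" by fastforce
  have ai: "a < n" "i < k" using x xa by (auto simp: VVc)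
  have bj: "b < n" "j < k" using y yb by (auto simp: VVc)
  have m_lt: "m < n" "0 < n" "k - 1 < k" "0 < k" using nm k3 by auto
  note g = gd[OF n3 k3]
  have e1: "int (cd n a 0) + int i - int (cd n b 0) - int j = lam"
    using l(1) g[OF ai(1) m_lt(2) ai(2) m_lt(4)] g[OF bj(1) m_lt(2) bj(2) m_lt(4)] xa yb
    by (simp add: ad_def split: if_splits)
  have adk: "ad i (k-1) = k-1-i" "ad j (k-1) = k-1-j" using ai bj by (auto simp: ad_def)
  have e2: "int (cd n a 0) + int (k - 1 - i) - int (cd n b 0) - int (k - 1 - j) = lam"
    using l(2) g[OF ai(1) m_lt(2) ai(2) m_lt(3)] g[OF bj(1) m_lt(2) bj(2) m_lt(3)] xa yb adk
    by simp
  have e3: "int (cd n a m) + int i - int (cd n b m) - int j = lam"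
    using l(3) g[OF ai(1) m_lt(1) ai(2) m_lt(4)] g[OF bj(1) m_lt(1) bj(2) m_lt(4)] xa yb
    by (simp add: ad_def split: if_splits)
  have ij: "i = j" using e1 e2 ai bj by linarith
  have "int (cd (2*m+1) a 0) - int (cd (2*m+1) a m) = int (cd (2*m+1) b 0) - int (cd (2*m+1) b m)"
    using e1 e3 ij nm by simp
  then have "a = b" using g_inj[of a m b] ai bj nm by simp
  then show False using ij ne xa yb by simp
qed

theorem theorem3p1:
  fixes n k :: nat
  assumes "n \<ge> 3" and "odd n" and "k \<ge> 3"
  shows "psi (cprod_V (cycle_V n) (path_V k)) (cprod_E (cycle_E n) (path_E k)) = 3"
  unfolding psi_def
proof (rule Least_equality)
  let ?Q = "{(0::nat, 0::nat), (0, k - 1), ((n - 1) div 2, 0)}"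
  have "card ?Q = 3" using assms by auto
  then show "\<exists>Q. finite Q \<and> card Q = 3 \<and> doubly_resolving (cprod_V (cycle_V n) (path_V k)) (cprod_E (cycle_E n) (path_E k)) Q"
    using upper[OF assms] by (intro exI[of _ ?Q]) simp
next
  fix m assume "\<exists>Q. finite Q \<and> card Q = m \<and> doubly_resolving (cprod_V (cycle_V n) (path_V k)) (cprod_E (cycle_E n) (path_E k)) Q"
  then show "3 \<le> m" using lower[OF assms] by blast
qed

end
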